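(* Let $\Gamma$ be a 3-colex and $E=\prod_{\nu\in\Omega}X_\nu$ an $X$-type error on the 3D color code on $\Gamma$. Suppose that for each color $c\in\{r,b,g,y\}$, $\mathsf F_c$ is a set of faces of $\Gamma^{*\setminus c}$ such that $\prod_{f\in\mathsf F_c}X_f=\pi_c(E)\,S_c$ for some $X$-stabilizer $S_c$ of the 3D toric code on $\Gamma^{*\setminus c}$ (i.e. $\pi_c(E)$ is estimated up to a stabilizer on $\Gamma^{*\setminus c}$). Then $\mathsf F=\bigcup_c\mathsf F_c$ equals $\partial(E S)$ for some $X$-stabilizer $S$ of the color code; that is, $\mathsf F$ is an estimate of $\partial E$ up to the boundary of an $X$-stabilizer of the color code.
   Context: Colors are $\{r,b,g,y\}$. A 3-colex $\Gamma$ is a 3-dimensional cell complex without boundary in which every vertex is 4-valent and lies in exactly four 3-cells, and whose 3-cells are properly 4-colored: every face lies in exactly two 3-cells, which have different colors. The dual complex $\Gamma^*$ has an $i$-cell for every $(3-i)$-cell of $\Gamma$, with incidences reversed; every 3-cell of $\Gamma^*$ is a tetrahedron. A vertex of $\Gamma^*$ is given the color of the corresponding 3-cell of $\Gamma$, so the four vertices of each tetrahedron have distinct colors. A face of $\Gamma^*$ is a $c$-face if none of its vertices has color $c$; each tetrahedron $\nu$ has a unique $c$-face $\pi_c(\nu)$. The 3D color code on $\Gamma$ has one qubit per tetrahedron of $\Gamma^*$, $X$-stabilizer generators $B^X_v=\prod_{\nu\ni v}X_\nu$ for vertices $v$ of $\Gamma^*$, and $Z$-stabilizer generators $B^Z_e=\prod_{\nu\supset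 e}Z_\nu$ for edges $e$; $X$-stabilizers are products of the $B^X_v$. The minor complex $\Gamma^{*\setminus c}$ is obtained from $\Gamma^*$ by deleting all vertices of color $c$ together with all edges and faces incident to them; its faces are the $c$-faces of $\Gamma^*$, and its 3-cells are obtained by merging, for each $c$-vertex $v$, all tetrahedra containing $v$ into one 3-cell. The 3D toric code on $\Gamma^{*\setminus c}$ has qubits on faces and $X$-stabilizer generators $\prod_{f\in\partial\mu}X_f$ for 3-cells $\mu$; its $X$-stabilizers are products of these. Operators are mapped by $\pi_c(\prod_{\nu\in\Omega}X_\nu)=\prod_{\nu\in\Omega}X_{\pi_c(\nu)}$ (with $X_f^2=I$). For an $X$-operator $E=\prod_{\nu\in\Omega}X_\nu$ on the color code, its boundary is $\partial E=\sum_{\nu\in\Omega}\partial\nu$, where $\partial\nu$ is the set of four faces of $\nu$ and the sum is the mod-2 sum (symmetric difference) of sets of faces. *)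

theory Defs
  imports Main
begin

datatype color = Red | Blue | Green | Yellow

definition msum :: "'a set \<Rightarrow> ('a \<Rightarrow> 'b set) \<Rightarrow> 'b set" where
  "msum A g = {x. odd (card {a \<in> A. x \<in> g a})}"

definition sdiff :: "'a set \<Rightarrow> 'a set \<Rightarrow> 'a set" where
  "sdiff A B = (A - B) \<union> (B - A)"

text \<open>Group generated (under symmetric difference, i.e. products of X-operators) by a set of supports.\<close>
inductive_set xspan :: "'a set set \<Rightarrow> 'a set set" for gens :: "'a set set" where
  empty: "{} \<in> xspan gens"
| step: "A \<in> xspan gens \<Longrightarrow> g \<in> gens \<Longrightarrow> sdiff A g \<in> xspan gens"

text \<open>The dual complex of a 3-colex: vertices V (coloured by col), faces Fs (triangles),
  tetrahedra T.\<close>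
locale colex_dual =
  fixes V :: "'v set" and Fs :: "'f set" and T :: "'t set"
    and col :: "'v \<Rightarrow> color"
    and tverts :: "'t \<Rightarrow> 'v set" and fverts :: "'f \<Rightarrow> 'v set" and tfaces :: "'t \<Rightarrow> 'f set"
  assumes fin_V: "finite V" and fin_F: "finite Fs" and fin_T: "finite T"
    and tverts_sub: "\<And>t. t \<in> T \<Longrightarrow> tverts t \<subseteq> V"
    and tverts_card: "\<And>t. t \<in> T \<Longrightarrow> card (tverts t) = 4"
    and tverts_colors: "\<And>t. t \<in> T \<Longrightarrow> inj_on col (tverts t)"
    and tfaces_sub: "\<And>t. t \<in> T \<Longrightarrow> tfaces t \<subseteq> Fs"
    and tfaces_card: "\<And>t. t \<in> T \<Longrightarrow> card (tfaces t) = 4"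
    and tfaces_inj: "\<And>t. t \<in> T \<Longrightarrow> inj_on fverts (tfaces t)"
    and face_in_tet: "\<And>t f. t \<in> T \<Longrightarrow> f \<in> tfaces t \<Longrightarrow> fverts f \<subseteq> tverts t"
    and fverts_sub: "\<And>f. f \<in> Fs \<Longrightarrow> fverts f \<subseteq> V"
    and fverts_card: "\<And>f. f \<in> Fs \<Longrightarrow> card (fverts f) = 3"
    and face_two_tets: "\<And>f. f \<in> Fs \<Longrightarrow> card {t \<in> T. f \<in> tfaces t} = 2"

definition cfaces :: "'f set \<Rightarrow> ('v \<Rightarrow> color) \<Rightarrow> ('f \<Rightarrow> 'v set) \<Rightarrow> color \<Rightarrow> 'f set" where
  "cfaces Fs col fverts c = {f \<in> Fs. c \<notin> col ` fverts f}"

definition pi_face :: "('v \<Rightarrow> color) \<Rightarrow> ('f \<Rightarrow> 'v set) \<Rightarrow> ('t \<Rightarrow> 'f set) \<Rightarrow> color \<Rightarrow> 't \<Rightarrow> 'f" where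
  "pi_face col fverts tfaces c t = (THE f. f \<in> tfaces t \<and> c \<notin> col ` fverts f)"

definition pi_op :: "('v \<Rightarrow> color) \<Rightarrow> ('f \<Rightarrow> 'v set) \<Rightarrow> ('t \<Rightarrow> 'f set) \<Rightarrow> color \<Rightarrow> 't set \<Rightarrow> 'f set" where
  "pi_op col fverts tfaces c \<Omega> = msum \<Omega> (\<lambda>t. {pi_face col fverts tfaces c t})"

text \<open>X-stabilizers of the color code: generated by the supports of B^X_v.\<close>
definition color_stabs :: "'v set \<Rightarrow> 't set \<Rightarrow> ('t \<Rightarrow> 'v set) \<Rightarrow> 't set set" where
  "color_stabs V T tverts = xspan ((\<lambda>v. {t \<in> T. v \<in> tverts t}) ` V)"

text \<open>Boundary of the 3-cell of the minor complex obtained by merging the tetrahedra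
  around the c-vertex v: the mod-2 sum of their c-faces.\<close>
definition minor_cell_bdry :: "'t set \<Rightarrow> ('v \<Rightarrow> color) \<Rightarrow> ('t \<Rightarrow> 'v set) \<Rightarrow> ('f \<Rightarrow> 'v set) \<Rightarrow> ('t \<Rightarrow> 'f set) \<Rightarrow> color \<Rightarrow> 'v \<Rightarrow> 'f set" where
  "minor_cell_bdry T col tverts fverts tfaces c v =
     msum {t \<in> T. v \<in> tverts t} (\<lambda>t. {pi_face col fverts tfaces c t})"

definition toric_stabs :: "'v set \<Rightarrow> 't set \<Rightarrow> ('v \<Rightarrow> color) \<Rightarrow> ('t \<Rightarrow> 'v set) \<Rightarrow> ('f \<Rightarrow> 'v set) \<Rightarrow> ('t \<Rightarrow> 'f set) \<Rightarrow> color \<Rightarrow> 'f set set" where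
  "toric_stabs V T col tverts fverts tfaces c =
     xspan (minor_cell_bdry T col tverts fverts tfaces c ` {v \<in> V. col v = c})"

definition bdry :: "('t \<Rightarrow> 'f set) \<Rightarrow> 't set \<Rightarrow> 'f set" where
  "bdry tfaces \<Omega> = msum \<Omega> tfaces"

end

theory Submission
  imports Defs
begin

lemma mem_sdiff: "x \<in> sdiff A B \<longleftrightarrow> (x \<in> A) \<noteq> (x \<in> B)"
  unfolding sdiff_def by auto

lemma finite_sdiff: "finite A \<Longrightarrow> finite B \<Longrightarrow> finite (sdiff A B)"
  unfolding sdiff_def by simp

lemma card_sdiff_parity:
  assumes "finite X" "finite Y"
  shows "odd (card (sdiff X Y)) \<longleftrightarrow> (odd (card X) \<noteq> odd (card Y))"
proof -
  have a: "card X = card (X - Y) + card (X \<inter> Y)"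
    using assms by (metis add.commute card_Int_Diff)
  have b: "card Y = card (Y - X) + card (X \<inter> Y)"
    using assms by (metis add.commute card_Int_Diff inf_commute)
  have c: "card (sdiff X Y) = card (X - Y) + card (Y - X)"
    unfolding sdiff_def using assms by (simp add: card_Un_disjnt disjnt_Diff2)
  show ?thesis using a b c by presburger
qed

lemma msum_sdiff:
  assumes "finite A" "finite B"
  shows "msum (sdiff A B) g = sdiff (msum A g) (msum B g)"
proof (rule set_eqI)
  fix x
  have "{a \<in> sdiff A B. x \<in> g a} = sdiff {a \<in> A. x \<in> g a} {a \<in> B. x \<in> g a}"
    unfolding sdiff_def by auto
  then show "x \<in> msum (sdiff A B) g \<longleftrightarrow> x \<in> sdiff (msum A g) (msum B g)"
    unfolding msum_def mem_sdiff using card_sdiff_parity[of "{a \<in> A. x \<in> g a}" "{a \<in> B. x \<in> g a}"] assms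
    by simp
qed

lemma sdiff_assoc: "sdiff (sdiff A B) C = sdiff A (sdiff B C)"
  unfolding sdiff_def by auto

lemma sdiff_empty: "sdiff A {} = A"
  unfolding sdiff_def by auto

lemma xspan_sdiff:
  assumes "B \<in> xspan G" "A \<in> xspan G"
  shows "sdiff A B \<in> xspan G"
  using assms
proof (induction B rule: xspan.induct)
  case empty
  then show ?case by (simp add: sdiff_empty)
next
  case (step B g)
  then show ?case by (metis sdiff_assoc xspan.step)
qed

lemma xspan_subset:
  assumes "A \<in> xspan G" "\<And>g. g \<in> G \<Longrightarrow> g \<subseteq> U"
  shows "A \<subseteq> U"
  using assms by (induction A rule: xspan.induct) (auto simp: sdiff_def)

lemma UNIV_color: "(UNIV :: color set) = {Red, Blue, Green, Yellow}"
  apply (rule set_eqI) apply (case_tac x) by auto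

lemma card_UNIV_color: "card (UNIV :: color set) = 4"
  unfolding UNIV_color by simp

lemma finite_UNIV_color: "finite (UNIV :: color set)"
  unfolding UNIV_color by simp

context colex_dual
begin

abbreviation "pf \<equiv> pi_face col fverts tfaces"

lemma col_surj:
  assumes "t \<in> T"
  shows "col ` tverts t = UNIV"
proof -
  have "card (col ` tverts t) = 4"
    using card_image[OF tverts_colors[OF assms]] tverts_card[OF assms] by simp
  then show ?thesis
    using card_UNIV_color card_subset_eq[OF finite_UNIV_color, of "col ` tverts t"] by simp
qed

lemma face_form:
  assumes t: "t \<in> T" and f: "f \<in> tfaces t"
  shows "\<exists>w \<in> tverts t. w \<notin> fverts f \<and> fverts f = tverts t - {w}"
proof -
  have sub: "fverts f \<subseteq> tverts t" using face_in_tet[OF t f] .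
  have c3: "card (fverts f) = 3" using fverts_card tfaces_sub[OF t] f by blast
  have c4: "card (tverts t) = 4" using tverts_card[OF t] .
  have fin: "finite (tverts t)" using c4 card.infinite by fastforce
  have "fverts f \<noteq> tverts t" using c3 c4 by auto
  then obtain w where w: "w \<in> tverts t" "w \<notin> fverts f" using sub by blast
  have sub2: "fverts f \<subseteq> tverts t - {w}" using sub w by blast
  have "card (tverts t - {w}) = 3" using c4 w fin by simp
  then have "fverts f = tverts t - {w}"
    using card_subset_eq[OF _ sub2] fin c3 by simp
  then show ?thesis using w by blast
qed

lemma face_missing_iff:
  assumes "t \<in> T" "f \<in> tfaces t" "v \<in> tverts t"
  shows "col v \<notin> col ` fverts f \<longleftrightarrow> v \<notin> fverts f"
proof
  assume "col v \<notin> col ` fverts f" then show "v \<notin> fverts f" by blast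
next
  assume nv: "v \<notin> fverts f"
  show "col v \<notin> col ` fverts f"
  proof
    assume "col v \<in> col ` fverts f"
    then obtain w where w: "w \<in> fverts f" "col w = col v" by auto
    have "w \<in> tverts t" using w face_in_tet assms by blast
    then have "w = v" using tverts_colors[OF assms(1)] w assms(3) by (meson inj_onD)
    then show False using w nv by simp
  qed
qed

lemma face_eq_minus:
  assumes t: "t \<in> T" and f: "f \<in> tfaces t" and v: "v \<in> tverts t" "v \<notin> fverts f"
  shows "fverts f = tverts t - {v}"
proof -
  obtain w where w: "w \<in> tverts t" "w \<notin> fverts f" "fverts f = tverts t - {w}"
    using face_form[OF t f] by blast
  then show ?thesis using v by auto
qed

lemma face_exists:
  assumes t: "t \<in> T" and v: "v \<in> tverts t"
  shows "\<exists>f \<in> tfaces t. v \<notin> fverts f"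
proof (rule ccontr)
  assume "\<not> ?thesis"
  then have allv: "\<And>f. f \<in> tfaces t \<Longrightarrow> v \<in> fverts f" by blast
  have "fverts ` tfaces t \<subseteq> (\<lambda>w. tverts t - {w}) ` (tverts t - {v})"
  proof
    fix y assume "y \<in> fverts ` tfaces t"
    then obtain f where f: "f \<in> tfaces t" "y = fverts f" by blast
    obtain w where w: "w \<in> tverts t" "w \<notin> fverts f" "fverts f = tverts t - {w}"
      using face_form[OF t f(1)] by blast
    have "w \<noteq> v" using allv[OF f(1)] w by blast
    then show "y \<in> (\<lambda>w. tverts t - {w}) ` (tverts t - {v})" using w f by blast
  qed
  moreover have c4: "card (tverts t) = 4" using tverts_card[OF t] .
  moreover have fin: "finite (tverts t)" using c4 card.infinite by fastforce
  ultimately have "card (fverts ` tfaces t) \<le> card (tverts t - {v})"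
    by (meson card_image_le card_mono finite_Diff finite_imageI order_trans)
  moreover have "card (fverts ` tfaces t) = 4"
    using card_image[OF tfaces_inj[OF t]] tfaces_card[OF t] by simp
  moreover have "card (tverts t - {v}) = 3" using c4 fin v by simp
  ultimately show False by simp
qed

lemma pi_face_ex1:
  assumes t: "t \<in> T"
  shows "\<exists>!f. f \<in> tfaces t \<and> c \<notin> col ` fverts f"
proof -
  obtain v where v: "v \<in> tverts t" "col v = c" using col_surj[OF t] by (metis UNIV_I imageE)
  obtain f where f: "f \<in> tfaces t" "v \<notin> fverts f" using face_exists[OF t v(1)] by blast
  have ex: "f \<in> tfaces t \<and> c \<notin> col ` fverts f"
    using f face_missing_iff[OF t f(1) v(1)] v by simp
  show ?thesis
  proof (rule ex1I[of _ f])
    show "f \<in> tfaces t \<and> c \<notin> col ` fverts f" by (rule ex)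
  next
    fix g assume g: "g \<in> tfaces t \<and> c \<notin> col ` fverts g"
    then have "v \<notin> fverts g" using face_missing_iff[OF t _ v(1)] v by blast
    then have "fverts g = fverts f"
      using face_eq_minus[OF t _ v(1)] f g by metis
    then show "g = f" using tfaces_inj[OF t] f g by (meson inj_onD)
  qed
qed

lemma pi_face:
  assumes t: "t \<in> T"
  shows "pf c t \<in> tfaces t" "c \<notin> col ` fverts (pf c t)"
  using theI'[OF pi_face_ex1[OF t, of c]] unfolding pi_face_def by auto

lemma pi_face_unique:
  assumes t: "t \<in> T" and "f \<in> tfaces t" "c \<notin> col ` fverts f"
  shows "f = pf c t"
  using pi_face_ex1[OF t, of c] pi_face[OF t, of c] assms by blast

lemma missing_color_unique:
  assumes t: "t \<in> T" and x: "x \<in> tfaces t"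
    and "c1 \<notin> col ` fverts x" "c2 \<notin> col ` fverts x"
  shows "c1 = c2"
proof -
  obtain w where w: "w \<in> tverts t" "w \<notin> fverts x" "fverts x = tverts t - {w}"
    using face_form[OF t x] by blast
  have "col ` fverts x = col ` tverts t - {col w}"
    using w inj_on_image_set_diff[OF tverts_colors[OF t]] by auto
  then have "col ` fverts x = UNIV - {col w}" using col_surj[OF t] by simp
  then show ?thesis using assms by auto
qed

lemma bdry_B:
  "bdry tfaces {t \<in> T. v \<in> tverts t} = minor_cell_bdry T col tverts fverts tfaces (col v) v"
proof (rule set_eqI)
  fix x
  let ?A = "{t \<in> {t \<in> T. v \<in> tverts t}. x \<in> tfaces t}"
  let ?B = "{t \<in> {t \<in> T. v \<in> tverts t}. x \<in> {pf (col v) t}}"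
  have "odd (card ?A) \<longleftrightarrow> odd (card ?B)"
  proof (cases "v \<in> fverts x")
    case True
    have "?A = {t \<in> T. x \<in> tfaces t}" using True face_in_tet by blast
    moreover have "even (card {t \<in> T. x \<in> tfaces t})"
    proof (cases "{t \<in> T. x \<in> tfaces t} = {}")
      case True then show ?thesis by (simp only: card.empty) simp
    next
      case False
      then have "x \<in> Fs" using tfaces_sub by blast
      then show ?thesis using face_two_tets by simp
    qed
    moreover have "?B = {}"
    proof -
      { fix t assume "t \<in> T" "x = pf (col v) t"
        then have "col v \<notin> col ` fverts x" using pi_face by blast
        then have False using True by blast }
      then show ?thesis by blast
    qed
    ultimately show ?thesis by (metis card.empty even_zero)
  next
    case False
    have "?A = ?B"
    proof (rule Collect_cong)
      fix t
      show "(t \<in> {t \<in> T. v \<in> tverts t} \<and> x \<in> tfaces t) \<longleftrightarrow> (t \<in> {t \<in> T. v \<in> tverts t} \<and> x \<in> {pf (col v) t})"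
      proof (cases "t \<in> T \<and> v \<in> tverts t")
        case True
        have "x \<in> tfaces t \<longleftrightarrow> x = pf (col v) t"
        proof
          assume xt: "x \<in> tfaces t"
          then have "col v \<notin> col ` fverts x" using face_missing_iff[OF _ xt] True False by blast
          then show "x = pf (col v) t" using pi_face_unique True xt by blast
        next
          assume "x = pf (col v) t" then show "x \<in> tfaces t" using pi_face True by blast
        qed
        then show ?thesis by simp
      qed auto
    qed
    then show ?thesis by simp
  qed
  then show "x \<in> bdry tfaces {t \<in> T. v \<in> tverts t} \<longleftrightarrow> x \<in> minor_cell_bdry T col tverts fverts tfaces (col v) v"
    unfolding bdry_def minor_cell_bdry_def msum_def by simp
qed

lemma color_stabs_sub: "S \<in> color_stabs V T tverts \<Longrightarrow> S \<subseteq> T"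
  unfolding color_stabs_def by (erule xspan_subset) blast

lemma color_stabs_fin: "S \<in> color_stabs V T tverts \<Longrightarrow> finite S"
  using color_stabs_sub fin_T finite_subset by blast

lemma toric_lift:
  assumes "S \<in> toric_stabs V T col tverts fverts tfaces c"
  shows "\<exists>S' \<in> color_stabs V T tverts. bdry tfaces S' = S"
  using assms unfolding toric_stabs_def
proof (induction S rule: xspan.induct)
  case empty
  then show ?case unfolding color_stabs_def bdry_def msum_def
    by (intro bexI[of _ "{}"]) (auto intro: xspan.empty)
next
  case (step A g)
  obtain S' where S': "S' \<in> color_stabs V T tverts" "bdry tfaces S' = A" using step.IH by blast
  obtain v where v: "v \<in> V" "col v = c" "g = minor_cell_bdry T col tverts fverts tfaces c v"
    using step.hyps(2) by blast
  let ?B = "{t \<in> T. v \<in> tverts t}"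
  have Bin: "?B \<in> (\<lambda>v. {t \<in> T. v \<in> tverts t}) ` V" using v by blast
  have new: "sdiff S' ?B \<in> color_stabs V T tverts"
    using S'(1) Bin unfolding color_stabs_def by (rule xspan.step)
  have "bdry tfaces (sdiff S' ?B) = sdiff (bdry tfaces S') (bdry tfaces ?B)"
    unfolding bdry_def using color_stabs_fin[OF S'(1)] fin_T by (simp add: msum_sdiff)
  also have "\<dots> = sdiff A g" using S'(2) bdry_B v by simp
  finally show ?case using new by blast
qed

lemma toric_sub:
  assumes "S \<in> toric_stabs V T col tverts fverts tfaces c"
  shows "S \<subseteq> cfaces Fs col fverts c"
  using assms unfolding toric_stabs_def
proof (rule xspan_subset)
  fix g assume "g \<in> minor_cell_bdry T col tverts fverts tfaces c ` {v \<in> V. col v = c}"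
  then obtain v where g: "g = minor_cell_bdry T col tverts fverts tfaces c v" by blast
  show "g \<subseteq> cfaces Fs col fverts c"
  proof
    fix x assume "x \<in> g"
    then have "odd (card {t \<in> {t \<in> T. v \<in> tverts t}. x \<in> {pf c t}})"
      unfolding g minor_cell_bdry_def msum_def by simp
    then obtain t where t: "t \<in> T" "x = pf c t" by (metis (no_types, lifting) card.empty empty_Collect_eq even_zero mem_Collect_eq singletonD)
    then show "x \<in> cfaces Fs col fverts c"
      unfolding cfaces_def using pi_face[OF t(1), of c] tfaces_sub[OF t(1)] by auto
  qed
qed

end

theorem theorem2:
  fixes V :: "'v set" and Fs :: "'f set" and T :: "'t set"
    and col :: "'v \<Rightarrow> color"
    and tverts :: "'t \<Rightarrow> 'v set" and fverts :: "'f \<Rightarrow> 'v set" and tfaces :: "'t \<Rightarrow> 'f set"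
    and \<Omega> :: "'t set" and F :: "color \<Rightarrow> 'f set"
  assumes "colex_dual V Fs T col tverts fverts tfaces"
    and "\<Omega> \<subseteq> T"
    and "\<And>c. F c \<subseteq> cfaces Fs col fverts c"
    and "\<And>c. \<exists>S \<in> toric_stabs V T col tverts fverts tfaces c.
               F c = sdiff (pi_op col fverts tfaces c \<Omega>) S"
  shows "\<exists>S \<in> color_stabs V T tverts. (\<Union>c. F c) = bdry tfaces (sdiff \<Omega> S)"
proof -
  interpret colex_dual V Fs T col tverts fverts tfaces by fact
  have "\<forall>c. \<exists>S. S \<in> toric_stabs V T col tverts fverts tfaces c \<and> F c = sdiff (pi_op col fverts tfaces c \<Omega>) S"
    using assms(4) by blast
  then obtain S where S: "\<And>c. S c \<in> toric_stabs V T col tverts fverts tfaces c"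
    "\<And>c. F c = sdiff (pi_op col fverts tfaces c \<Omega>) (S c)" by metis
  have "\<forall>c. \<exists>S'. S' \<in> color_stabs V T tverts \<and> bdry tfaces S' = S c"
    using toric_lift S(1) by blast
  then obtain S' where S': "\<And>c. S' c \<in> color_stabs V T tverts" "\<And>c. bdry tfaces (S' c) = S c"
    by metis
  have fin: "\<And>c. finite (S' c)" using color_stabs_fin S'(1) by blast
  define SS where "SS = sdiff (sdiff (S' Red) (S' Blue)) (sdiff (S' Green) (S' Yellow))"
  have SS_in: "SS \<in> color_stabs V T tverts"
    unfolding SS_def color_stabs_def using S'(1)[unfolded color_stabs_def] by (meson xspan_sdiff)
  have finO: "finite \<Omega>" using assms(2) fin_T finite_subset by blast
  have eq: "bdry tfaces (sdiff \<Omega> SS) = sdiff (bdry tfaces \<Omega>) (sdiff (sdiff (S Red) (S Blue)) (sdiff (S Green) (S Yellow)))"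
    unfolding SS_def S'(2)[symmetric] bdry_def using fin finO by (simp add: msum_sdiff finite_sdiff)
  have "(\<Union>c. F c) = bdry tfaces (sdiff \<Omega> SS)"
  proof (rule set_eqI)
    fix x
    show "x \<in> (\<Union>c. F c) \<longleftrightarrow> x \<in> bdry tfaces (sdiff \<Omega> SS)"
    proof (cases "x \<in> Fs")
      case False
      have l: "x \<notin> (\<Union>c. F c)" using assms(3) False unfolding cfaces_def by blast
      have "{t \<in> \<Omega>. x \<in> tfaces t} = {}" using False tfaces_sub assms(2) by blast
      then have b: "x \<notin> bdry tfaces \<Omega>" unfolding bdry_def msum_def by (simp only: mem_Collect_eq card.empty) simp
      have "\<And>c. x \<notin> S c" using toric_sub[OF S(1)] False unfolding cfaces_def by blast
      then show ?thesis using l b eq by (simp add: mem_sdiff)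
    next
      case True
      have "{t \<in> T. x \<in> tfaces t} \<noteq> {}" using face_two_tets[OF True] by (metis card.empty zero_neq_numeral)
      then obtain t where t: "t \<in> T" "x \<in> tfaces t" by blast
      obtain w where w: "w \<in> tverts t" "w \<notin> fverts x" "fverts x = tverts t - {w}"
        using face_form[OF t] by blast
      define c0 where "c0 = col w"
      have c0: "c0 \<notin> col ` fverts x" using face_missing_iff[OF t w(1)] w(2) c0_def by simp
      have other: "\<And>c. c \<notin> col ` fverts x \<Longrightarrow> c = c0"
        using missing_color_unique[OF t _ c0] by blast
      have lhs: "x \<in> (\<Union>c. F c) \<longleftrightarrow> x \<in> F c0"
        using assms(3) other unfolding cfaces_def by blast
      have Sc: "\<And>c. c \<noteq> c0 \<Longrightarrow> x \<notin> S c"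
        using toric_sub[OF S(1)] other unfolding cfaces_def by blast
      have "{t \<in> \<Omega>. x \<in> tfaces t} = {t \<in> \<Omega>. x \<in> {pf c0 t}}"
      proof (rule Collect_cong)
        fix s
        show "(s \<in> \<Omega> \<and> x \<in> tfaces s) \<longleftrightarrow> (s \<in> \<Omega> \<and> x \<in> {pf c0 s})"
          using pi_face_unique[of s x c0] pi_face[of s c0] c0 assms(2) by blast
      qed
      then have bp: "x \<in> bdry tfaces \<Omega> \<longleftrightarrow> x \<in> pi_op col fverts tfaces c0 \<Omega>"
        unfolding bdry_def pi_op_def msum_def by simp
      have r: "x \<in> bdry tfaces (sdiff \<Omega> SS) \<longleftrightarrow> (x \<in> bdry tfaces \<Omega>) \<noteq> (x \<in> S c0)"
        unfolding eq mem_sdiff using Sc by (cases c0) auto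
      have l: "x \<in> F c0 \<longleftrightarrow> (x \<in> pi_op col fverts tfaces c0 \<Omega>) \<noteq> (x \<in> S c0)"
        using S(2)[of c0] mem_sdiff by simp
      show ?thesis using lhs r l bp by simp
    qed
  qed
  then show ?thesis using SS_in by blast
qed

end
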